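(* For each integer $d\ge 2$, the hypergraph $C_d$ is tranquil.
   Context: For an integer $d\ge 2$, $C_d$ is the $d$-uniform hypergraph with vertex set $\mathbb{Z}^d$ and hyperedges $\{x+re_1,\ldots,x+re_d\}$ for all $x\in\mathbb{Z}^d$ and positive integers $r$, where $e_1,\ldots,e_d$ is the standard basis of $\mathbb{Z}^d$. A closed walk of length $\ell$ in a hypergraph $H$ is a sequence $v_0F_0v_1F_1\ldots F_{\ell-1}v_0$ of alternating vertices and hyperedges such that $v_i,v_{i+1}\in F_i$ for all $0\le i<\ell$ (indices mod $\ell$, so $v_\ell=v_0$), $F_i\neq F_{i+1}$ for each $0\le i<\ell$ (indices mod $\ell$), and $v_1,\ldots,v_{\ell-1}$ are pairwise distinct (the $F_i$ need not be distinct). An $r$-uniform hypergraph $H$ is tranquil if there is a family of labellings $\lambda=\{\lambda_F\}_{F\in E(H)}$, with $\lambda_F:F\to\{1,\ldots,r\}$, such that for every closed walk $W=v_0F_0v_1\ldots F_{\ell-1}v_0$ of $H$, the multigraph with vertex set $\{1,\ldots,r\}$ and edge multiset $\{\lambda_{F_i}(v_i)\lambda_{F_i}(v_{i+1}) : 0\le i<\ell\}$ is bridgeless (a bridge is an edge whose removal increases the number of connected components). *)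

theory Defs
  imports Main "HOL-Library.Multiset"
begin

text \<open>A multigraph on vertex set V is given by a multiset of (unordered) edges,
  each edge represented as a pair (a,b) of its endpoints.\<close>

definition mg_conn :: "'a set \<Rightarrow> ('a \<times> 'a) multiset \<Rightarrow> ('a \<times> 'a) set" where
  "mg_conn V M = (((set_mset M) \<union> (set_mset M)\<inverse>) \<inter> (V \<times> V))\<^sup>*"

definition mg_num_components :: "'a set \<Rightarrow> ('a \<times> 'a) multiset \<Rightarrow> nat" where
  "mg_num_components V M = card (V // mg_conn V M)"

definition mg_is_bridge :: "'a set \<Rightarrow> ('a \<times> 'a) multiset \<Rightarrow> 'a \<times> 'a \<Rightarrow> bool" where
  "mg_is_bridge V M e \<longleftrightarrow> e \<in># M \<and>
     mg_num_components V (M - {#e#}) > mg_num_components V M"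

definition mg_bridgeless :: "'a set \<Rightarrow> ('a \<times> 'a) multiset \<Rightarrow> bool" where
  "mg_bridgeless V M \<longleftrightarrow> (\<forall>e. \<not> mg_is_bridge V M e)"

text \<open>A hypergraph is given by its vertex set V and its set of hyperedges E.
  A closed walk of length l is v_0 F_0 v_1 ... F_(l-1) v_0, encoded by
  vs i = v_i and Fs i = F_i for i < l (indices mod l).\<close>

definition closed_walk ::
  "'v set \<Rightarrow> 'v set set \<Rightarrow> nat \<Rightarrow> (nat \<Rightarrow> 'v) \<Rightarrow> (nat \<Rightarrow> 'v set) \<Rightarrow> bool" where
  "closed_walk V E l vs Fs \<longleftrightarrow> 0 < l \<and> vs 0 \<in> V \<and>
     (\<forall>i<l. Fs i \<in> E \<and> vs i \<in> Fs i \<and> vs (Suc i mod l) \<in> Fs i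
            \<and> Fs i \<noteq> Fs (Suc i mod l)) \<and>
     inj_on vs {1..<l}"

definition walk_label_multigraph ::
  "('v set \<Rightarrow> 'v \<Rightarrow> nat) \<Rightarrow> nat \<Rightarrow> (nat \<Rightarrow> 'v) \<Rightarrow> (nat \<Rightarrow> 'v set) \<Rightarrow> (nat \<times> nat) multiset" where
  "walk_label_multigraph lab l vs Fs =
     mset (map (\<lambda>i. (lab (Fs i) (vs i), lab (Fs i) (vs (Suc i mod l)))) [0..<l])"

definition tranquil :: "'v set \<Rightarrow> 'v set set \<Rightarrow> nat \<Rightarrow> bool" where
  "tranquil V E r \<longleftrightarrow> (\<exists>lab :: 'v set \<Rightarrow> 'v \<Rightarrow> nat.
     (\<forall>F\<in>E. bij_betw (lab F) F {1..r}) \<and>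
     (\<forall>l vs Fs. closed_walk V E l vs Fs \<longrightarrow>
        mg_bridgeless {1..r} (walk_label_multigraph lab l vs Fs)))"

text \<open>Z^d is represented by functions nat \<Rightarrow> int vanishing outside {0..<d};
  coordinate i (0-based) corresponds to e_(i+1).\<close>

definition Zd :: "nat \<Rightarrow> (nat \<Rightarrow> int) set" where
  "Zd d = {x. \<forall>i\<ge>d. x i = 0}"

definition unit_vec :: "nat \<Rightarrow> nat \<Rightarrow> int" where
  "unit_vec i = (\<lambda>j. if j = i then 1 else 0)"

definition C_edges :: "nat \<Rightarrow> (nat \<Rightarrow> int) set set" where
  "C_edges d = {F. \<exists>x\<in>Zd d. \<exists>r::int. r > 0 \<and>
       F = (\<lambda>i. (\<lambda>j. x j + r * unit_vec i j)) ` {0..<d}}"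

end

theory Submission
  imports Defs
begin

definition hedge :: "nat \<Rightarrow> (nat \<Rightarrow> int) \<Rightarrow> int \<Rightarrow> (nat \<Rightarrow> int) set" where
  "hedge d x r = (\<lambda>i. (\<lambda>j. x j + r * unit_vec i j)) ` {0..<d}"

definition pick :: "nat \<Rightarrow> (nat \<Rightarrow> int) set \<Rightarrow> (nat \<Rightarrow> int) \<times> int" where
  "pick d F = (SOME p. snd p > 0 \<and> F = hedge d (fst p) (snd p))"

definition labC :: "nat \<Rightarrow> (nat \<Rightarrow> int) set \<Rightarrow> (nat \<Rightarrow> int) \<Rightarrow> nat" where
  "labC d F v = Suc (SOME i. i < d \<and> v = (\<lambda>j. fst (pick d F) j + snd (pick d F) * unit_vec i j))"

definition phi :: "nat \<Rightarrow> nat set \<Rightarrow> (nat \<Rightarrow> int) \<Rightarrow> int" where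
  "phi d S y = (\<Sum>j<d. if Suc j \<in> S then y j else 0)"

lemma pick_ok:
  assumes "F \<in> C_edges d"
  shows "snd (pick d F) > 0 \<and> F = hedge d (fst (pick d F)) (snd (pick d F))"
proof -
  have "\<exists>p. snd p > 0 \<and> F = hedge d (fst p) (snd p)"
    using assms unfolding C_edges_def hedge_def by auto
  then show ?thesis unfolding pick_def by (rule someI_ex)
qed

lemma vec_inj:
  assumes "(r::int) \<noteq> 0" "(\<lambda>j. x j + r * unit_vec i j) = (\<lambda>j. x j + r * unit_vec i' j)"
  shows "i = i'"
proof -
  have "x i + r * unit_vec i i = x i + r * unit_vec i' i" using assms(2) by metis
  then show ?thesis using assms(1) unfolding unit_vec_def by (auto split: if_splits)
qed

lemma lab_ok:
  assumes "F \<in> C_edges d" "v \<in> F"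
  shows "labC d F v \<in> {1..d} \<and>
     v = (\<lambda>j. fst (pick d F) j + snd (pick d F) * unit_vec (labC d F v - 1) j)"
proof -
  let ?x = "fst (pick d F)" and ?r = "snd (pick d F)"
  have P: "?r > 0" "F = hedge d ?x ?r" using pick_ok[OF assms(1)] by auto
  then obtain i where i: "i < d" "v = (\<lambda>j. ?x j + ?r * unit_vec i j)"
  proof -
    have "v \<in> hedge d ?x ?r" using assms(2) P(2) by metis
    then obtain i where "i \<in> {0..<d}" "v = (\<lambda>i j. ?x j + ?r * unit_vec i j) i"
      unfolding hedge_def by (rule imageE)
    then show ?thesis using that by simp
  qed
  then have "\<exists>i. i < d \<and> v = (\<lambda>j. ?x j + ?r * unit_vec i j)" by blast
  from someI_ex[OF this] have "(SOME i. i < d \<and> v = (\<lambda>j. ?x j + ?r * unit_vec i j)) < d \<and>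
     v = (\<lambda>j. ?x j + ?r * unit_vec (SOME i. i < d \<and> v = (\<lambda>j. ?x j + ?r * unit_vec i j)) j)" .
  then show ?thesis unfolding labC_def by auto
qed

lemma lab_bij:
  assumes "F \<in> C_edges d"
  shows "bij_betw (labC d F) F {1..d}"
proof -
  let ?x = "fst (pick d F)" and ?r = "snd (pick d F)"
  have P: "?r > 0" "F = hedge d ?x ?r" using pick_ok[OF assms(1)] by auto
  have inj: "inj_on (labC d F) F"
  proof
    fix v w assume "v \<in> F" "w \<in> F" "labC d F v = labC d F w"
    then show "v = w" using lab_ok[OF assms(1) \<open>v \<in> F\<close>] lab_ok[OF assms(1) \<open>w \<in> F\<close>] by metis
  qed
  have "labC d F ` F = {1..d}"
  proof
    show "labC d F ` F \<subseteq> {1..d}" using lab_ok[OF assms(1)] by auto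
  next
    show "{1..d} \<subseteq> labC d F ` F"
    proof
      fix n assume n: "n \<in> {1..d}"
      define v where "v = (\<lambda>j. ?x j + ?r * unit_vec (n - 1) j)"
      have vF: "v \<in> F" using n P(2) unfolding v_def hedge_def by auto
      have "v = (\<lambda>j. ?x j + ?r * unit_vec (labC d F v - 1) j)"
        using lab_ok[OF assms(1) vF] by blast
      then have "n - 1 = labC d F v - 1" using vec_inj[of ?r ?x "n-1" "labC d F v - 1"] P(1)
        unfolding v_def by auto
      then have "n = labC d F v" using n lab_ok[OF assms(1) vF] by auto
      then show "n \<in> labC d F ` F" using vF by blast
    qed
  qed
  then show ?thesis using inj unfolding bij_betw_def by blast
qed

lemma phi_vec:
  assumes "i < d"
  shows "phi d S (\<lambda>j. x j + r * unit_vec i j) = phi d S x + (if Suc i \<in> S then r else 0)"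
proof -
  have "phi d S (\<lambda>j. x j + r * unit_vec i j) =
     phi d S x + (\<Sum>j<d. if Suc j \<in> S then r * unit_vec i j else 0)"
    unfolding phi_def sum.distrib[symmetric] by (rule sum.cong) auto
  also have "(\<Sum>j<d. if Suc j \<in> S then r * unit_vec i j else 0) =
      (\<Sum>j<d. if j = i then (if Suc i \<in> S then r else 0) else 0)"
    by (rule sum.cong) (auto simp: unit_vec_def)
  also have "\<dots> = (if Suc i \<in> S then r else 0)" using assms by simp
  finally show ?thesis .
qed

lemma sum_shift_mod:
  assumes "0 < l"
  shows "(\<Sum>k<l. g (Suc k mod l)) = (\<Sum>k<l. (g k :: int))"
proof -
  obtain m where l: "l = Suc m" using assms not0_implies_Suc by blast
  have "(\<Sum>k<Suc m. g (Suc k mod Suc m)) = (\<Sum>k<m. g (Suc k mod Suc m)) + g 0"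
    by simp
  also have "(\<Sum>k<m. g (Suc k mod Suc m)) = (\<Sum>k<m. g (Suc k))"
    by (rule sum.cong) auto
  also have "(\<Sum>k<m. g (Suc k)) + g 0 = (\<Sum>k<Suc m. g k)"
    by (simp only: sum.lessThan_Suc_shift)
  finally show ?thesis using l by simp
qed


lemma conn_sym:
  assumes "(p, q) \<in> mg_conn V M"
  shows "(q, p) \<in> mg_conn V M"
proof -
  let ?G = "((set_mset M) \<union> (set_mset M)\<inverse>) \<inter> (V \<times> V)"
  have "?G\<inverse> = ?G" by auto
  have "(p, q) \<in> ?G\<^sup>*" using assms unfolding mg_conn_def .
  then have "(q, p) \<in> (?G\<inverse>)\<^sup>*" by (simp add: rtrancl_converse)
  then show ?thesis unfolding mg_conn_def using \<open>?G\<inverse> = ?G\<close> by simp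
qed

lemma bridge_split:
  assumes "mg_is_bridge V M (a, b)"
  shows "a \<in> V \<and> b \<in> V \<and> (a, b) \<notin> mg_conn V (M - {#(a, b)#})"
proof (rule ccontr)
  let ?e = "(a, b)"
  let ?R = "mg_conn V M" and ?R' = "mg_conn V (M - {#?e#})"
  assume H: "\<not> (a \<in> V \<and> b \<in> V \<and> (a, b) \<notin> ?R')"
  have eM: "?e \<in># M" using assms unfolding mg_is_bridge_def by blast
  have sub1: "set_mset (M - {#?e#}) \<subseteq> set_mset M" by (meson in_diffD subsetI)
  have "?R' \<subseteq> ?R" unfolding mg_conn_def
    by (rule rtrancl_mono) (use sub1 in blast)
  moreover have "?R \<subseteq> ?R'"
  proof -
    have G: "((set_mset M) \<union> (set_mset M)\<inverse>) \<inter> (V \<times> V) \<subseteq> ?R'"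
    proof
      fix z assume z: "z \<in> ((set_mset M) \<union> (set_mset M)\<inverse>) \<inter> (V \<times> V)"
      obtain u w where zz: "z = (u, w)" by fastforce
      have ab: "(a, b) \<in> V \<times> V \<Longrightarrow> (a, b) \<in> ?R'" using H by blast
      have one: "(u, w) \<in> ?R'" if "(u, w) \<in># M" "u \<in> V" "w \<in> V" for u w
      proof (cases "(u, w) = ?e")
        case True then show ?thesis using ab that by auto
      next
        case False
        then have "(u, w) \<in># M - {#?e#}" using that by (auto simp: in_diff_count)
        then show ?thesis unfolding mg_conn_def using that by blast
      qed
      show "z \<in> ?R'" using z zz one conn_sym by (metis IntE Un_iff converse_iff mem_Sigma_iff)
    qed
    have "?R \<subseteq> ?R'\<^sup>*" unfolding mg_conn_def[of V M]
      by (rule rtrancl_mono) (use G in simp)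
    then show ?thesis unfolding mg_conn_def by simp
  qed
  ultimately have "?R = ?R'" by blast
  then show False using assms unfolding mg_is_bridge_def mg_num_components_def by simp
qed

theorem lemma3p2:
  fixes d :: nat
  assumes "d \<ge> 2"
  shows "tranquil (Zd d) (C_edges d) d"
  unfolding tranquil_def
proof (intro exI conjI allI impI)
  show "\<forall>F\<in>C_edges d. bij_betw (labC d F) F {1..d}" using lab_bij by blast
next
  fix l vs Fs
  assume cw: "closed_walk (Zd d) (C_edges d) l vs Fs"
  have l0: "0 < l" using cw unfolding closed_walk_def by blast
  have st: "\<And>i. i < l \<Longrightarrow> Fs i \<in> C_edges d \<and> vs i \<in> Fs i \<and> vs (Suc i mod l) \<in> Fs i"
    using cw unfolding closed_walk_def by blast
  define f where "f k = (labC d (Fs k) (vs k), labC d (Fs k) (vs (Suc k mod l)))" for k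
  define M where "M = walk_label_multigraph (labC d) l vs Fs"
  have Mf: "M = mset (map f [0..<l])" unfolding M_def walk_label_multigraph_def f_def ..
  show "mg_bridgeless {1..d} (walk_label_multigraph (labC d) l vs Fs)"
    unfolding mg_bridgeless_def M_def[symmetric]
  proof (intro allI notI)
    fix e assume br: "mg_is_bridge {1..d} M e"
    obtain a b where e: "e = (a, b)" by fastforce
    let ?R' = "mg_conn {1..d} (M - {#e#})"
    have eM: "e \<in># M" using br unfolding mg_is_bridge_def by blast
    have sp: "a \<in> {1..d}" "b \<in> {1..d}" "(a, b) \<notin> ?R'"
      using bridge_split[of "{1..d}" M a b] br e by auto
    define S where "S = ?R' `` {a}"
    define r where "r k = snd (pick d (Fs k))" for k
    define t where "t k = phi d S (vs (Suc k mod l)) - phi d S (vs k)" for k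
    have sum0: "(\<Sum>k<l. t k) = 0"
      unfolding t_def sum_subtractf using sum_shift_mod[OF l0, of "\<lambda>k. phi d S (vs k)"] by simp
    have tk: "t k = r k * ((if snd (f k) \<in> S then 1 else 0) - (if fst (f k) \<in> S then 1 else 0))"
      and fV: "fst (f k) \<in> {1..d}" "snd (f k) \<in> {1..d}" and rpos: "r k > 0"
      if k: "k < l" for k
    proof -
      have Fk: "Fs k \<in> C_edges d" and v1: "vs k \<in> Fs k" and v2: "vs (Suc k mod l) \<in> Fs k"
        using st[OF k] by auto
      let ?x = "fst (pick d (Fs k))"
      have L1: "labC d (Fs k) (vs k) \<in> {1..d}"
        "vs k = (\<lambda>j. ?x j + r k * unit_vec (labC d (Fs k) (vs k) - 1) j)"
        using lab_ok[OF Fk v1] unfolding r_def by auto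
      have L2: "labC d (Fs k) (vs (Suc k mod l)) \<in> {1..d}"
        "vs (Suc k mod l) = (\<lambda>j. ?x j + r k * unit_vec (labC d (Fs k) (vs (Suc k mod l)) - 1) j)"
        using lab_ok[OF Fk v2] unfolding r_def by auto
      have p1: "phi d S (vs k) = phi d S ?x + (if labC d (Fs k) (vs k) \<in> S then r k else 0)"
        using phi_vec[of "labC d (Fs k) (vs k) - 1" d S ?x "r k"] L1 by auto
      have p2: "phi d S (vs (Suc k mod l)) = phi d S ?x +
           (if labC d (Fs k) (vs (Suc k mod l)) \<in> S then r k else 0)"
        using phi_vec[of "labC d (Fs k) (vs (Suc k mod l)) - 1" d S ?x "r k"] L2 by auto
      show "t k = r k * ((if snd (f k) \<in> S then 1 else 0) - (if fst (f k) \<in> S then 1 else 0))"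
        unfolding t_def p1 p2 f_def by simp
      show "fst (f k) \<in> {1..d}" "snd (f k) \<in> {1..d}" using L1 L2 unfolding f_def by auto
      show "r k > 0" using pick_ok[OF Fk] unfolding r_def by auto
    qed
    have aS: "a \<in> S" unfolding S_def mg_conn_def by blast
    have bS: "b \<notin> S" unfolding S_def using sp(3) by blast
    have tle: "t k \<le> 0" if k: "k < l" for k
    proof (cases "f k = e")
      case True
      then show ?thesis using tk[OF k] rpos[OF k] aS bS e by auto
    next
      case False
      obtain p q where pq: "f k = (p, q)" by fastforce
      have "f k \<in># M" unfolding Mf using k by auto
      then have "(p, q) \<in># M - {#e#}" using False pq by (simp add: in_diff_count)
      moreover have "p \<in> {1..d}" "q \<in> {1..d}" using fV[OF k] pq by auto
      ultimately have "(p, q) \<in> ?R'" unfolding mg_conn_def by blast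
      then have "(q, p) \<in> ?R'" by (rule conn_sym)
      have "p \<in> S \<longleftrightarrow> q \<in> S" unfolding S_def
        using \<open>(p, q) \<in> ?R'\<close> \<open>(q, p) \<in> ?R'\<close> unfolding mg_conn_def
        by (meson Image_singleton_iff rtrancl_trans)
      then show ?thesis using tk[OF k] pq by auto
    qed
    obtain k0 where k0: "k0 < l" "f k0 = e" using eM unfolding Mf by auto
    have tneg: "t k0 < 0" using tk[OF k0(1)] rpos[OF k0(1)] aS bS e k0(2) by auto
    have "(\<Sum>k<l. t k) = t k0 + (\<Sum>k\<in>{..<l} - {k0}. t k)"
      using k0(1) by (simp add: sum.remove)
    also have "(\<Sum>k\<in>{..<l} - {k0}. t k) \<le> 0" by (rule sum_nonpos) (use tle in auto)
    finally have "(\<Sum>k<l. t k) < 0" using tneg by linarith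
    then show False using sum0 by simp
  qed
qed

end
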